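(* Let $f(\cdot\,;z)$ be non-negative and $\beta$-smooth for every $z\in\mathcal{Z}$, and let $A$ be any symmetric deterministic algorithm. Then the generalization error satisfies $$|\epsilon_{\mathrm{gen}}|\le 2\sqrt{2\beta\,(\epsilon_{\mathrm{opt}}+\epsilon_{\mathbf{c}})\,\epsilon_{\mathrm{stab}(A)}}+2\beta\,\epsilon_{\mathrm{stab}(A)},$$ where $\epsilon_{\mathrm{stab}(A)}=\mathbb{E}[\|A(S)-A(S^{(i)})\|_2^2]$.
   Context: Let $\mathcal{D}$ be an unknown distribution on an example space $\mathcal{Z}$, and let $z_1,\dots,z_n,z_1',\dots,z_n'$ be i.i.d. samples from $\mathcal{D}$. Set $S=(z_1,\dots,z_n)$ and, for $i\in\{1,\dots,n\}$, $S^{(i)}=(z_1,\dots,z_{i-1},z_i',z_{i+1},\dots,z_n)$. The loss is $f:\mathbb{R}^d\times\mathcal{Z}\to[0,\infty)$; $\beta$-smooth means $\|\nabla_w f(w,z)-\nabla_w f(u,z)\|_2\le\beta\|w-u\|_2$ for all $w,u\in\mathbb{R}^d$. Population risk $R(w)=\mathbb{E}_{Z\sim\mathcal{D}}[f(w,Z)]$; empirical risk $R_S(w)=\frac1n\sum_{j=1}^n f(w,z_j)$. For each dataset $S$, $W^*_S$ denotes a minimizer of $R_S$ (assumed to exist). A deterministic algorithm $A$ maps a dataset to a point $A(S)\in\mathbb{R}^d$; it is symmetric if its output is unchanged under permutations of the dataset. Definitions (all expectations over all the random samples): generalization error $\epsilon_{\mathrm{gen}}=\mathbb{E}[R(A(S))-R_S(A(S))]$;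 expected output stability $\epsilon_{\mathrm{stab}(A)}=\mathbb{E}[\|A(S)-A(S^{(i)})\|_2^2]$ (for a fixed index $i$; for symmetric $A$ it does not depend on $i$); expected optimization error $\epsilon_{\mathrm{opt}}=\mathbb{E}[R_S(A(S))-R_S(W^*_S)]$; model capacity (interpolation) error $\epsilon_{\mathbf{c}}=\mathbb{E}[R_S(W^*_S)]$. *)

theory Defs
  imports "HOL-Probability.Probability" "HOL-Combinatorics.Permutations"
begin

definition beta_smooth :: "real \<Rightarrow> (real^'d \<Rightarrow> 'z \<Rightarrow> real) \<Rightarrow> bool" where
  "beta_smooth \<beta> f \<longleftrightarrow>
     (\<forall>z. \<exists>g. (\<forall>w. GDERIV (\<lambda>v. f v z) w :> g w) \<and>
              (\<forall>w u. norm (g w - g u) \<le> \<beta> * norm (w - u)))"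

definition pop_risk :: "'z measure \<Rightarrow> ('w \<Rightarrow> 'z \<Rightarrow> real) \<Rightarrow> 'w \<Rightarrow> real" where
  "pop_risk D f w = (\<integral>z. f w z \<partial>D)"

definition emp_risk :: "('w \<Rightarrow> 'z \<Rightarrow> real) \<Rightarrow> 'z list \<Rightarrow> 'w \<Rightarrow> real" where
  "emp_risk f S w = (\<Sum>j<length S. f w (S ! j)) / real (length S)"

definition symmetric_alg :: "('z list \<Rightarrow> 'w) \<Rightarrow> bool" where
  "symmetric_alg A \<longleftrightarrow>
     (\<forall>S \<sigma>. \<sigma> permutes {..<length S} \<longrightarrow> A (permute_list \<sigma> S) = A S)"

text \<open>The sample: a pair (s, s') of functions on {..<n}; S = [s 0, ..., s (n-1)],
  and S^(i) replaces the i-th entry by s' i.\<close>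

definition sample_space :: "nat \<Rightarrow> 'z measure \<Rightarrow> ((nat \<Rightarrow> 'z) \<times> (nat \<Rightarrow> 'z)) measure" where
  "sample_space n D = (PiM {..<n} (\<lambda>_. D)) \<Otimes>\<^sub>M (PiM {..<n} (\<lambda>_. D))"

definition dataS :: "nat \<Rightarrow> (nat \<Rightarrow> 'z) \<times> (nat \<Rightarrow> 'z) \<Rightarrow> 'z list" where
  "dataS n \<omega> = map (fst \<omega>) [0..<n]"

definition dataSi :: "nat \<Rightarrow> nat \<Rightarrow> (nat \<Rightarrow> 'z) \<times> (nat \<Rightarrow> 'z) \<Rightarrow> 'z list" where
  "dataSi n i \<omega> = (map (fst \<omega>) [0..<n])[i := snd \<omega> i]"

end

theory Submission
  imports Defs
begin


lemma descent:
  fixes \<phi> :: "'a::real_inner \<Rightarrow> real"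
  assumes gd: "\<And>w. GDERIV \<phi> w :> g w"
    and lip: "\<And>w u. norm (g w - g u) \<le> \<beta> * norm (w - u)" and b0: "0 \<le> \<beta>"
  shows "\<bar>\<phi> w - \<phi> u - g u \<bullet> (w - u)\<bar> \<le> \<beta> * (norm (w - u))\<^sup>2"
proof -
  define d where "d = w - u"
  define h where "h = (\<lambda>x::real. \<phi> (u + x *\<^sub>R d) - x * (g u \<bullet> d))"
  have der: "DERIV h x :> (g (u + x *\<^sub>R d) \<bullet> d - g u \<bullet> d)" for x
  proof -
    have l: "((\<lambda>x::real. u + x *\<^sub>R d) has_derivative (\<lambda>h. h *\<^sub>R d)) (at x)"
      by (auto intro!: derivative_eq_intros)
    have "((\<lambda>v. \<phi> v) has_derivative (\<lambda>h. h \<bullet> g (u + x *\<^sub>R d))) (at (u + x *\<^sub>R d))"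
      using gd[of "u + x *\<^sub>R d"] by (simp add: gderiv_def)
    from has_derivative_compose[OF l this]
    have hd: "((\<lambda>x. \<phi> (u + x *\<^sub>R d)) has_derivative (\<lambda>h. h * (g (u + x *\<^sub>R d) \<bullet> d))) (at x)"
      by (simp add: o_def inner_commute)
    have "((\<lambda>x. \<phi> (u + x *\<^sub>R d)) has_real_derivative (g (u + x *\<^sub>R d) \<bullet> d)) (at x)"
    proof -
      have e: "(\<lambda>h. h * (g (u + x *\<^sub>R d) \<bullet> d)) = (*) (g (u + x *\<^sub>R d) \<bullet> d)"
        by (auto simp: fun_eq_iff)
      show ?thesis using hd unfolding has_field_derivative_def e .
    qed
    then show ?thesis unfolding h_def
      by (auto intro!: derivative_eq_intros)
  qed
  obtain z where z: "0 < z" "z < 1" "h 1 - h 0 = (1 - 0) * (g (u + z *\<^sub>R d) \<bullet> d - g u \<bullet> d)"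
    using MVT2[of 0 1 h "\<lambda>x. g (u + x *\<^sub>R d) \<bullet> d - g u \<bullet> d"] der by auto
  have "\<bar>g (u + z *\<^sub>R d) \<bullet> d - g u \<bullet> d\<bar> = \<bar>(g (u + z *\<^sub>R d) - g u) \<bullet> d\<bar>"
    by (simp add: inner_diff_left)
  also have "\<dots> \<le> norm (g (u + z *\<^sub>R d) - g u) * norm d"
    by (rule Cauchy_Schwarz_ineq2)
  also have "\<dots> \<le> (\<beta> * norm (z *\<^sub>R d)) * norm d"
    using lip[of "u + z *\<^sub>R d" u] by (intro mult_right_mono) auto
  also have "\<dots> \<le> \<beta> * (norm d)\<^sup>2"
  proof -
    have "\<beta> * norm (z *\<^sub>R d) * norm d = z * (\<beta> * (norm d)\<^sup>2)" using z by (simp add: power2_eq_square)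
    also have "\<dots> \<le> 1 * (\<beta> * (norm d)\<^sup>2)" using z b0 by (intro mult_right_mono) auto
    finally show ?thesis by simp
  qed
  finally have "\<bar>h 1 - h 0\<bar> \<le> \<beta> * (norm d)\<^sup>2" using z by simp
  then show ?thesis unfolding h_def d_def by (simp add: algebra_simps)
qed

lemma grad_bound:
  fixes \<phi> :: "'a::real_inner \<Rightarrow> real"
  assumes nn: "\<And>w. 0 \<le> \<phi> w" and b0: "0 \<le> \<beta>"
    and desc: "\<And>w u. \<bar>\<phi> w - \<phi> u - g u \<bullet> (w - u)\<bar> \<le> \<beta> * (norm (w - u))\<^sup>2"
  shows "(norm (g u))\<^sup>2 \<le> 4 * \<beta> * \<phi> u"
proof (cases "g u = 0")
  case True then show ?thesis using nn b0 by simp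
next
  case False
  define G where "G = (norm (g u))\<^sup>2"
  have G: "G > 0" using False by (simp add: G_def)
  have gg: "g u \<bullet> g u = G" by (simp add: G_def power2_norm_eq_inner)
  have key: "0 \<le> \<phi> u - s * G + \<beta> * s\<^sup>2 * G" for s
  proof -
    have "\<bar>\<phi> (u - s *\<^sub>R g u) - \<phi> u - g u \<bullet> ((u - s *\<^sub>R g u) - u)\<bar> \<le> \<beta> * (norm ((u - s *\<^sub>R g u) - u))\<^sup>2"
      by (rule desc)
    moreover have "g u \<bullet> ((u - s *\<^sub>R g u) - u) = - s * G"
    proof -
      have "g u \<bullet> g u = G" by (simp add: G_def power2_norm_eq_inner)
      then show ?thesis by (simp add: inner_diff_right)
    qed
    moreover have "(norm ((u - s *\<^sub>R g u) - u))\<^sup>2 = s\<^sup>2 * G"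
      by (simp add: G_def power_mult_distrib)
    ultimately have "\<bar>\<phi> (u - s *\<^sub>R g u) - \<phi> u + s * G\<bar> \<le> \<beta> * (s\<^sup>2 * G)" by (simp only:)
    then show ?thesis using nn[of "u - s *\<^sub>R g u"] by (simp add: abs_le_iff mult.assoc)
  qed
  show ?thesis
  proof (cases "\<beta> = 0")
    case True
    from key[of "(\<phi> u + 1) / G"] G True show ?thesis by simp
  next
    case False
    then have bp: "\<beta> > 0" using b0 by simp
    from key[of "1 / (2 * \<beta>)"] have "0 \<le> \<phi> u - G / (2*\<beta>) + G / (4 * \<beta>)"
      using bp by (simp add: power2_eq_square field_simps)
    then have "G / (4 * \<beta>) \<le> \<phi> u" by (simp add: field_simps)
    then show ?thesis using bp by (simp add: G_def field_simps)
  qed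
qed

lemma pointwise:
  fixes \<phi> :: "'a::real_inner \<Rightarrow> real"
  assumes gd: "\<And>w. GDERIV \<phi> w :> g w"
    and lip: "\<And>w u. norm (g w - g u) \<le> \<beta> * norm (w - u)" and b0: "0 \<le> \<beta>"
    and nn: "\<And>w. 0 \<le> \<phi> w" and t: "0 < t"
  shows "\<bar>\<phi> w - \<phi> u\<bar> \<le> 2 * t * \<beta> * \<phi> u + (norm (w - u))\<^sup>2 / (2 * t) + \<beta> * (norm (w - u))\<^sup>2"
proof -
  note desc = descent[OF gd lip b0]
  have gb: "(norm (g u))\<^sup>2 \<le> 4 * \<beta> * \<phi> u" by (rule grad_bound[OF nn b0 desc])
  define a where "a = norm (g u)"
  define c where "c = norm (w - u)"
  have "\<bar>g u \<bullet> (w - u)\<bar> \<le> a * c" unfolding a_def c_def by (rule Cauchy_Schwarz_ineq2)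
  moreover have "a * c \<le> t * a\<^sup>2 / 2 + c\<^sup>2 / (2 * t)"
  proof -
    have "0 \<le> (t * a - c)\<^sup>2" by simp
    then have "2 * t * (a * c) \<le> t\<^sup>2 * a\<^sup>2 + c\<^sup>2" by (simp add: power2_eq_square algebra_simps)
    then show ?thesis using t by (simp add: field_simps power2_eq_square)
  qed
  moreover have "t * a\<^sup>2 / 2 \<le> 2 * t * \<beta> * \<phi> u" using gb t unfolding a_def by simp
  ultimately have "\<bar>g u \<bullet> (w - u)\<bar> \<le> 2 * t * \<beta> * \<phi> u + c\<^sup>2 / (2 * t)" by linarith
  moreover have "\<bar>\<phi> w - \<phi> u - g u \<bullet> (w - u)\<bar> \<le> \<beta> * c\<^sup>2" using desc unfolding c_def .
  ultimately show ?thesis unfolding c_def by linarith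
qed



lemma upd_meas:
  assumes "i \<in> I"
  shows "(\<lambda>(s, b). s(i := b)) \<in> measurable (PiM I (\<lambda>_. D) \<Otimes>\<^sub>M D) (PiM I (\<lambda>_. D))"
proof -
  have e: "(\<lambda>(s, b). s(i := b)) = (\<lambda>\<omega> j. (\<lambda>j \<omega>. if j = i then snd \<omega> else fst \<omega> j) j \<omega>)"
    by (auto simp: fun_eq_iff)
  show ?thesis unfolding e
  proof (rule measurable_PiM_single')
    fix j assume j: "j \<in> I"
    show "(\<lambda>\<omega>. if j = i then snd \<omega> else fst \<omega> j) \<in> measurable (PiM I (\<lambda>_. D) \<Otimes>\<^sub>M D) D"
      using j by (cases "j = i") auto
  next
    show "(\<lambda>\<omega> j. if j = i then snd \<omega> else fst \<omega> j) \<in> space (PiM I (\<lambda>_. D) \<Otimes>\<^sub>M D) \<rightarrow> (\<Pi>\<^sub>E j\<in>I. space D)"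
      using assms by (auto simp: space_pair_measure space_PiM PiE_iff extensional_def)
  qed
qed

lemma marg:
  assumes D: "prob_space D" and i: "i \<in> I" and \<phi>: "\<phi> \<in> borel_measurable D"
  shows "(\<integral>\<^sup>+s. \<phi> (s i) \<partial>PiM I (\<lambda>_. D)) = (\<integral>\<^sup>+z. \<phi> z \<partial>D)"
proof -
  have "distr (PiM I (\<lambda>_. D)) D (\<lambda>\<omega>. \<omega> i) = D"
    using distr_PiM_component[of I "\<lambda>_. D" i] D i by simp
  then have "(\<integral>\<^sup>+z. \<phi> z \<partial>D) = (\<integral>\<^sup>+z. \<phi> z \<partial>distr (PiM I (\<lambda>_. D)) D (\<lambda>\<omega>. \<omega> i))" by simp
  also have "\<dots> = (\<integral>\<^sup>+s. \<phi> (s i) \<partial>PiM I (\<lambda>_. D))"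
    using i \<phi> by (subst nn_integral_distr) auto
  finally show ?thesis by simp
qed

lemma fst_int:
  assumes N: "prob_space N" and \<phi>: "\<phi> \<in> borel_measurable M1"
  shows "(\<integral>\<^sup>+\<omega>. \<phi> (fst \<omega>) \<partial>(M1 \<Otimes>\<^sub>M N)) = (\<integral>\<^sup>+x. \<phi> x \<partial>M1)"
proof -
  interpret N: prob_space N by fact
  have "(\<integral>\<^sup>+\<omega>. \<phi> (fst \<omega>) \<partial>(M1 \<Otimes>\<^sub>M N)) = (\<integral>\<^sup>+x. \<integral>\<^sup>+y. \<phi> (fst (x, y)) \<partial>N \<partial>M1)"
    using \<phi> by (subst N.nn_integral_fst) auto
  also have "\<dots> = (\<integral>\<^sup>+x. \<phi> x \<partial>M1)"
    by (simp add: N.emeasure_space_1)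
  finally show ?thesis .
qed

lemma resample:
  assumes D: "prob_space D" and I: "finite I" and i: "i \<in> I"
    and H: "H \<in> borel_measurable (PiM I (\<lambda>_. D))"
  shows "(\<integral>\<^sup>+s. \<integral>\<^sup>+b. H (s(i := b)) \<partial>D \<partial>PiM I (\<lambda>_. D)) = (\<integral>\<^sup>+s. H s \<partial>PiM I (\<lambda>_. D))"
proof -
  interpret D: prob_space D by fact
  interpret P: product_sigma_finite "\<lambda>_. D"
    by (simp add: product_sigma_finite_def D.sigma_finite_measure_axioms)
  define J where "J = I - {i}"
  have IJ: "I = insert i J" "i \<notin> J" "finite J" using I i by (auto simp: J_def)
  have Hc: "(\<lambda>(s, b). H (s(i := b))) \<in> borel_measurable (PiM I (\<lambda>_. D) \<Otimes>\<^sub>M D)"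
    using measurable_comp[OF upd_meas[OF i] H] by (simp add: o_def case_prod_beta')
  have k: "(\<lambda>s. \<integral>\<^sup>+b. H (s(i := b)) \<partial>D) \<in> borel_measurable (PiM I (\<lambda>_. D))"
    using D.borel_measurable_nn_integral[of "\<lambda>s b. H (s(i := b))"] Hc by simp
  have "(\<integral>\<^sup>+s. \<integral>\<^sup>+b. H (s(i := b)) \<partial>D \<partial>PiM I (\<lambda>_. D))
      = (\<integral>\<^sup>+x. \<integral>\<^sup>+y. \<integral>\<^sup>+b. H ((x(i := y))(i := b)) \<partial>D \<partial>D \<partial>PiM J (\<lambda>_. D))"
    using P.product_nn_integral_insert[OF IJ(3) IJ(2), of "\<lambda>s. \<integral>\<^sup>+b. H (s(i := b)) \<partial>D"] k
    unfolding IJ(1) by simp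
  also have "\<dots> = (\<integral>\<^sup>+x. \<integral>\<^sup>+b. H (x(i := b)) \<partial>D \<partial>PiM J (\<lambda>_. D))"
    by (simp add: D.emeasure_space_1)
  also have "\<dots> = (\<integral>\<^sup>+s. H s \<partial>PiM I (\<lambda>_. D))"
    using P.product_nn_integral_insert[OF IJ(3) IJ(2), of H] H
    unfolding IJ(1) by simp
  finally show ?thesis .
qed

lemma swap_int:
  fixes D :: "'a measure"
  assumes D: "prob_space D" and i: "i < n" and j: "j < n" and symm: "symmetric_alg A"
    and hm: "(\<lambda>s. A (map s [0..<n])) \<in> borel_measurable (PiM {..<n} (\<lambda>_. D))"
    and F: "F \<in> borel_measurable (borel \<Otimes>\<^sub>M D)"
  shows "(\<integral>\<^sup>+s. F (A (map s [0..<n]), s j) \<partial>PiM {..<n} (\<lambda>_. D))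
       = (\<integral>\<^sup>+s. F (A (map s [0..<n]), s i) \<partial>PiM {..<n} (\<lambda>_. D))"
proof -
  define M where "M = PiM {..<n} (\<lambda>_::nat. D)"
  define t where "t = Transposition.transpose i j"
  define T where "T = (\<lambda>\<omega>::nat \<Rightarrow> 'a. \<lambda>k\<in>{..<n}. \<omega> (t k))"
  have tp: "t permutes {..<n}" unfolding t_def using i j by (intro permutes_swap_id) auto
  have tI: "t k < n" if "k < n" for k using tp that permutes_in_image by fastforce
  have dist: "distr M M T = M"
    unfolding M_def T_def
    using distr_PiM_reindex[of "{..<n}" "\<lambda>_. D" t "{..<n}"] D tp tI
    by (simp add: permutes_inj_on Pi_iff)
  have Tm: "T \<in> measurable M M"
    unfolding M_def T_def using tI by (intro measurable_restrict) auto
  have Hm: "(\<lambda>s. F (A (map s [0..<n]), s i)) \<in> borel_measurable M"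
    unfolding M_def using hm F i by (intro measurable_compose[OF _ F] measurable_Pair) auto
  have "(\<integral>\<^sup>+s. F (A (map s [0..<n]), s i) \<partial>M) = (\<integral>\<^sup>+s. F (A (map s [0..<n]), s i) \<partial>distr M M T)"
    by (simp add: dist)
  also have "\<dots> = (\<integral>\<^sup>+s. F (A (map (T s) [0..<n]), T s i) \<partial>M)"
    using Tm Hm by (subst nn_integral_distr) auto
  also have "\<dots> = (\<integral>\<^sup>+s. F (A (map s [0..<n]), s j) \<partial>M)"
  proof (rule nn_integral_cong)
    fix s
    have "map (T s) [0..<n] = permute_list t (map s [0..<n])"
      unfolding permute_list_def T_def using tI by (intro nth_equalityI) auto
    then have "A (map (T s) [0..<n]) = A (map s [0..<n])"
      using symm tp unfolding symmetric_alg_def by simp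
    moreover have "T s i = s j" unfolding T_def t_def using i by simp
    ultimately show "F (A (map (T s) [0..<n]), T s i) = F (A (map s [0..<n]), s j)" by simp
  qed
  finally show ?thesis unfolding M_def by simp
qed



lemma opt_bound:
  fixes x a b c :: real
  assumes le: "\<And>t. 0 < t \<Longrightarrow> x \<le> a * t + b / t + c" and a: "0 \<le> a" and b: "0 \<le> b"
  shows "x \<le> 2 * sqrt (a * b) + c"
proof (cases "a > 0 \<and> b > 0")
  case True
  define t where "t = sqrt (b / a)"
  have t: "t > 0" using True by (simp add: t_def)
  have "a * t = sqrt (a * b)" using True
    by (simp add: t_def real_sqrt_divide real_sqrt_mult field_simps)
  moreover have "b / t = sqrt (a * b)" using True
    by (simp add: t_def real_sqrt_divide real_sqrt_mult field_simps)
  ultimately show ?thesis using le[OF t] by simp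
next
  case False
  then have ab: "a * b = 0" using a b by auto
  show ?thesis
  proof (rule ccontr)
    assume "\<not> ?thesis"
    then have xc: "x > c" using ab by simp
    show False
    proof (cases "a = 0")
      case True
      define t where "t = 2 * (b + 1) / (x - c)"
      have t: "t > 0" using xc b by (simp add: t_def)
      have "b / t = b * (x - c) / (2 * (b + 1))" using xc b by (simp add: t_def)
      also have "\<dots> < (x - c)"
      proof -
        have "b * c \<le> b * x" using xc b by (intro mult_left_mono) auto
        then have "b * (x - c) < (x - c) * (2 * (b + 1))" using xc b by (simp add: algebra_simps)
        then show ?thesis using b by (subst pos_divide_less_eq) auto
      qed
      finally show False using le[OF t] True by simp
    next
      case False
      then have b0: "b = 0" and ap: "a > 0" using ab a by auto
      define t where "t = (x - c) / (2 * a)"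
      have t: "t > 0" using xc ap by (simp add: t_def)
      have "a * t = (x - c) / 2" using ap by (simp add: t_def)
      then show False using le[OF t] b0 xc by simp
    qed
  qed
qed

theorem theorem4:
  fixes D :: "'z measure" and f :: "real^'d \<Rightarrow> 'z \<Rightarrow> real" and \<beta> :: real
    and n i :: nat and A :: "'z list \<Rightarrow> real^'d" and Wstar :: "'z list \<Rightarrow> real^'d"
  defines "\<Omega> \<equiv> sample_space n D"
  defines "eps_gen \<equiv> (\<integral>\<omega>. pop_risk D f (A (dataS n \<omega>)) - emp_risk f (dataS n \<omega>) (A (dataS n \<omega>)) \<partial>\<Omega>)"
  defines "eps_stab \<equiv> (\<integral>\<omega>. (norm (A (dataS n \<omega>) - A (dataSi n i \<omega>)))\<^sup>2 \<partial>\<Omega>)"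
  defines "eps_opt \<equiv> (\<integral>\<omega>. emp_risk f (dataS n \<omega>) (A (dataS n \<omega>)) - emp_risk f (dataS n \<omega>) (Wstar (dataS n \<omega>)) \<partial>\<Omega>)"
  defines "eps_c \<equiv> (\<integral>\<omega>. emp_risk f (dataS n \<omega>) (Wstar (dataS n \<omega>)) \<partial>\<Omega>)"
  assumes D: "prob_space D"
    and n: "1 \<le> n" and i: "i < n"
    and nonneg: "\<And>w z. 0 \<le> f w z"
    and smooth: "beta_smooth \<beta> f"
    and symm: "symmetric_alg A"
    and Wstar_min: "\<And>S w. length S = n \<Longrightarrow> emp_risk f S (Wstar S) \<le> emp_risk f S w"
    and f_meas: "(\<lambda>(w, z). f w z) \<in> borel_measurable (borel \<Otimes>\<^sub>M D)"
    and A_meas: "(\<lambda>s. A (map s [0..<n])) \<in> borel_measurable (PiM {..<n} (\<lambda>_. D))"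
    and int_f: "\<And>w. integrable D (f w)"
    and int_R: "integrable \<Omega> (\<lambda>\<omega>. pop_risk D f (A (dataS n \<omega>)))"
    and int_RS: "integrable \<Omega> (\<lambda>\<omega>. emp_risk f (dataS n \<omega>) (A (dataS n \<omega>)))"
    and int_RW: "integrable \<Omega> (\<lambda>\<omega>. emp_risk f (dataS n \<omega>) (Wstar (dataS n \<omega>)))"
    and int_stab: "integrable \<Omega> (\<lambda>\<omega>. (norm (A (dataS n \<omega>) - A (dataSi n i \<omega>)))\<^sup>2)"
  shows "\<bar>eps_gen\<bar> \<le> 2 * sqrt (2 * \<beta> * (eps_opt + eps_c) * eps_stab) + 2 * \<beta> * eps_stab"

proof -
  interpret D: prob_space D by (rule D)
  define M where "M = PiM {..<n} (\<lambda>_::nat. D)"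
  interpret M: prob_space M unfolding M_def by (intro prob_space_PiM D)
  have \<Omega>: "\<Omega> = M \<Otimes>\<^sub>M M" unfolding \<Omega>_def sample_space_def M_def ..
  interpret PM: pair_prob_space M M by standard
  define h where "h = (\<lambda>s. A (map s [0..<n]))"
  have hm: "h \<in> borel_measurable M" unfolding h_def M_def by (rule A_meas)
  have ii: "i \<in> {..<n}" using i by simp
  define H where "H = (\<lambda>s. f (h s) (s i))"
  have fm: "(\<lambda>x. f (fst x) (snd x)) \<in> borel_measurable (borel \<Otimes>\<^sub>M D)"
    using f_meas by (simp add: case_prod_beta')
  have Hm: "H \<in> borel_measurable M"
    unfolding H_def using measurable_compose[OF measurable_Pair[OF hm, of "\<lambda>s. s i"] fm] ii
    by (simp add: M_def)
  define FA where "FA = (\<lambda>\<omega>. f (A (dataS n \<omega>)) (snd \<omega> i))"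
  define FB where "FB = (\<lambda>\<omega>. f (A (dataSi n i \<omega>)) (snd \<omega> i))"
  have dS: "dataS n \<omega> = map (fst \<omega>) [0..<n]" for \<omega> :: "(nat \<Rightarrow> 'z) \<times> (nat \<Rightarrow> 'z)" by (simp add: dataS_def)
  have dSi: "dataSi n i \<omega> = map ((fst \<omega>)(i := snd \<omega> i)) [0..<n]" for \<omega> :: "(nat \<Rightarrow> 'z) \<times> (nat \<Rightarrow> 'z)"
    unfolding dataSi_def using i by (intro nth_equalityI) auto
  define Hu where "Hu = (\<lambda>p::(nat \<Rightarrow> 'z) \<times> 'z. H ((fst p)(i := snd p)))"
  have Hum: "Hu \<in> borel_measurable (M \<Otimes>\<^sub>M D)"
    unfolding Hu_def using measurable_comp[OF upd_meas[OF ii, of D] Hm[unfolded M_def]]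
    by (simp add: o_def case_prod_beta' M_def)
  have Hu_eq: "Hu (s, b) = f (h (s(i := b))) b" for s b by (simp add: Hu_def H_def)
  have pim: "(\<lambda>\<omega>::(nat \<Rightarrow> 'z) \<times> (nat \<Rightarrow> 'z). (fst \<omega>, snd \<omega> i)) \<in> measurable (M \<Otimes>\<^sub>M M) (M \<Otimes>\<^sub>M D)"
    using ii by (intro measurable_Pair) (auto simp: M_def)
  have FBm: "FB \<in> borel_measurable \<Omega>"
  proof -
    have "FB = Hu \<circ> (\<lambda>\<omega>. (fst \<omega>, snd \<omega> i))"
      by (auto simp: fun_eq_iff FB_def Hu_eq dSi h_def)
    then show ?thesis unfolding \<Omega> using measurable_comp[OF pim Hum] by simp
  qed
  have FAm: "FA \<in> borel_measurable \<Omega>"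
  proof -
    have e: "FA = (\<lambda>x. f (fst x) (snd x)) \<circ> (\<lambda>\<omega>. (h (fst \<omega>), snd \<omega> i))"
      by (auto simp: fun_eq_iff FA_def dS h_def)
    have m: "(\<lambda>\<omega>::(nat \<Rightarrow> 'z) \<times> (nat \<Rightarrow> 'z). (h (fst \<omega>), snd \<omega> i)) \<in> measurable (M \<Otimes>\<^sub>M M) (borel \<Otimes>\<^sub>M D)"
      using ii hm by (intro measurable_Pair) (auto simp: M_def)
    show ?thesis using measurable_comp[OF m fm] unfolding e \<Omega> .
  qed

  have FBe: "(\<lambda>\<omega>. ennreal (FB \<omega>)) \<in> borel_measurable (M \<Otimes>\<^sub>M M)" using FBm unfolding \<Omega> by simp
  have FAe: "(\<lambda>\<omega>. ennreal (FA \<omega>)) \<in> borel_measurable (M \<Otimes>\<^sub>M M)" using FAm unfolding \<Omega> by simp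
  have E3: "(\<integral>\<^sup>+\<omega>. ennreal (FB \<omega>) \<partial>\<Omega>) = (\<integral>\<^sup>+s. ennreal (H s) \<partial>M)"
  proof -
    have "(\<integral>\<^sup>+\<omega>. ennreal (FB \<omega>) \<partial>\<Omega>) = (\<integral>\<^sup>+s. \<integral>\<^sup>+s'. ennreal (FB (s, s')) \<partial>M \<partial>M)"
      unfolding \<Omega> using M.nn_integral_fst[OF FBe] by simp
    also have "\<dots> = (\<integral>\<^sup>+s. \<integral>\<^sup>+b. ennreal (H (s(i := b))) \<partial>D \<partial>M)"
    proof (rule nn_integral_cong)
      fix s assume s: "s \<in> space M"
      have "(\<lambda>b. ennreal (Hu (s, b))) \<in> borel_measurable D"
        using measurable_compose_Pair1[OF s Hum] by simp
      then have "(\<integral>\<^sup>+s'. ennreal (Hu (s, s' i)) \<partial>M) = (\<integral>\<^sup>+b. ennreal (Hu (s, b)) \<partial>D)"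
        unfolding M_def by (rule marg[OF D ii])
      moreover have "FB (s, s') = Hu (s, s' i)" for s'
        by (simp add: FB_def Hu_eq dSi h_def)
      ultimately show "(\<integral>\<^sup>+s'. ennreal (FB (s, s')) \<partial>M) = (\<integral>\<^sup>+b. ennreal (H (s(i := b))) \<partial>D)"
        by (simp add: Hu_def)
    qed
    also have "\<dots> = (\<integral>\<^sup>+s. ennreal (H s) \<partial>M)"
      unfolding M_def using resample[OF D _ ii, of "\<lambda>s. ennreal (H s)"] Hm by (simp add: M_def)
    finally show ?thesis .
  qed
  have E1: "(\<integral>\<^sup>+\<omega>. ennreal (FA \<omega>) \<partial>\<Omega>) = (\<integral>\<^sup>+\<omega>. ennreal (pop_risk D f (A (dataS n \<omega>))) \<partial>\<Omega>)"
  proof -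
    define \<Phi> where "\<Phi> = (\<lambda>s. \<integral>\<^sup>+z. ennreal (f (h s) z) \<partial>D)"
    have fhm: "(\<lambda>p. f (h (fst p)) (snd p)) \<in> borel_measurable (M \<Otimes>\<^sub>M D)"
    proof -
      have m: "(\<lambda>p. (h (fst p), snd p)) \<in> measurable (M \<Otimes>\<^sub>M D) (borel \<Otimes>\<^sub>M D)"
        using hm by (intro measurable_Pair) auto
      show ?thesis using measurable_comp[OF m fm] by (simp add: o_def)
    qed
    have \<Phi>m: "\<Phi> \<in> borel_measurable M"
      unfolding \<Phi>_def using D.borel_measurable_nn_integral[of "\<lambda>s z. ennreal (f (h s) z)" M] fhm
      by (simp add: case_prod_beta')
    have "(\<integral>\<^sup>+\<omega>. ennreal (FA \<omega>) \<partial>\<Omega>) = (\<integral>\<^sup>+s. \<integral>\<^sup>+s'. ennreal (FA (s, s')) \<partial>M \<partial>M)"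
      unfolding \<Omega> using M.nn_integral_fst[OF FAe] by simp
    also have "\<dots> = (\<integral>\<^sup>+s. \<Phi> s \<partial>M)"
    proof (rule nn_integral_cong)
      fix s assume s: "s \<in> space M"
      have "(\<lambda>z. ennreal (f (h s) z)) \<in> borel_measurable D"
        using int_f[of "h s"] by auto
      then have "(\<integral>\<^sup>+s'. ennreal (f (h s) (s' i)) \<partial>M) = \<Phi> s"
        unfolding M_def \<Phi>_def by (rule marg[OF D ii])
      then show "(\<integral>\<^sup>+s'. ennreal (FA (s, s')) \<partial>M) = \<Phi> s"
        by (simp add: FA_def dS h_def)
    qed
    also have "\<dots> = (\<integral>\<^sup>+\<omega>. \<Phi> (fst \<omega>) \<partial>\<Omega>)"
      unfolding \<Omega> using fst_int[OF M.prob_space_axioms \<Phi>m] by simp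
    also have "\<dots> = (\<integral>\<^sup>+\<omega>. ennreal (pop_risk D f (A (dataS n \<omega>))) \<partial>\<Omega>)"
    proof (rule nn_integral_cong)
      fix \<omega> :: "(nat \<Rightarrow> 'z) \<times> (nat \<Rightarrow> 'z)"
      show "\<Phi> (fst \<omega>) = ennreal (pop_risk D f (A (dataS n \<omega>)))"
        unfolding \<Phi>_def pop_risk_def dS h_def
        by (rule nn_integral_eq_integral[OF int_f]) (simp add: nonneg)
    qed
    finally show ?thesis .
  qed

  define Hj where "Hj = (\<lambda>j s. f (h s) (s j))"
  have Hjm: "(\<lambda>s. Hj j s) \<in> borel_measurable M" if j: "j < n" for j
    unfolding Hj_def using measurable_compose[OF measurable_Pair[OF hm, of "\<lambda>s. s j"] fm] j
    by (simp add: M_def)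
  define RSf where "RSf = (\<lambda>s. (\<Sum>j<n. Hj j s) / real n)"
  have RSfm: "RSf \<in> borel_measurable M"
    unfolding RSf_def using Hjm by (intro borel_measurable_divide borel_measurable_sum) auto
  have RS_eq: "emp_risk f (dataS n \<omega>) (A (dataS n \<omega>)) = RSf (fst \<omega>)" for \<omega> :: "(nat \<Rightarrow> 'z) \<times> (nat \<Rightarrow> 'z)"
    unfolding emp_risk_def RSf_def Hj_def h_def by (simp add: dS)
  have E2: "(\<integral>\<^sup>+\<omega>. ennreal (emp_risk f (dataS n \<omega>) (A (dataS n \<omega>))) \<partial>\<Omega>) = (\<integral>\<^sup>+s. ennreal (H s) \<partial>M)"
  proof -
    have "(\<integral>\<^sup>+\<omega>. ennreal (emp_risk f (dataS n \<omega>) (A (dataS n \<omega>))) \<partial>\<Omega>) = (\<integral>\<^sup>+\<omega>. ennreal (RSf (fst \<omega>)) \<partial>\<Omega>)"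
      by (simp add: RS_eq)
    also have "\<dots> = (\<integral>\<^sup>+s. ennreal (RSf s) \<partial>M)"
      unfolding \<Omega> using fst_int[OF M.prob_space_axioms, of "\<lambda>s. ennreal (RSf s)"] RSfm by simp
    also have "\<dots> = (\<integral>\<^sup>+s. (\<Sum>j<n. ennreal (Hj j s)) * ennreal (1 / real n) \<partial>M)"
    proof (rule nn_integral_cong)
      fix s
      have "RSf s = (\<Sum>j<n. Hj j s) * (1 / real n)" by (simp add: RSf_def)
      moreover have "(\<Sum>j<n. ennreal (Hj j s)) = ennreal (\<Sum>j<n. Hj j s)"
        by (rule sum_ennreal) (simp add: Hj_def nonneg)
      moreover have "0 \<le> (\<Sum>j<n. Hj j s)" by (intro sum_nonneg) (simp add: Hj_def nonneg)
      ultimately show "ennreal (RSf s) = (\<Sum>j<n. ennreal (Hj j s)) * ennreal (1 / real n)"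
        by (simp only:) (rule ennreal_mult, simp_all)
    qed
    also have "\<dots> = (\<integral>\<^sup>+s. (\<Sum>j<n. ennreal (Hj j s)) \<partial>M) * ennreal (1 / real n)"
      using Hjm by (intro nn_integral_multc) auto
    also have "(\<integral>\<^sup>+s. (\<Sum>j<n. ennreal (Hj j s)) \<partial>M) = (\<Sum>j<n. \<integral>\<^sup>+s. ennreal (Hj j s) \<partial>M)"
      using Hjm by (intro nn_integral_sum) auto
    also have "\<dots> = (\<Sum>j<n. \<integral>\<^sup>+s. ennreal (H s) \<partial>M)"
    proof (rule sum.cong)
      fix j assume "j \<in> {..<n}"
      then have j: "j < n" by simp
      have "(\<lambda>p. ennreal (f (fst p) (snd p))) \<in> borel_measurable (borel \<Otimes>\<^sub>M D)" using fm by simp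
      from swap_int[OF D i j symm A_meas this]
      show "(\<integral>\<^sup>+s. ennreal (Hj j s) \<partial>M) = (\<integral>\<^sup>+s. ennreal (H s) \<partial>M)"
        by (simp add: Hj_def H_def h_def M_def)
    qed simp
    also have "\<dots> = of_nat n * (\<integral>\<^sup>+s. ennreal (H s) \<partial>M)" by simp
    also have "\<dots> * ennreal (1 / real n) = (\<integral>\<^sup>+s. ennreal (H s) \<partial>M)"
    proof -
      have "(of_nat n :: ennreal) * ennreal (1 / real n) = ennreal (real n * (1 / real n))"
        by (simp only: ennreal_of_nat_eq_real_of_nat) (rule ennreal_mult[symmetric], simp_all)
      also have "\<dots> = 1" using n by simp
      finally have "(of_nat n :: ennreal) * ennreal (1 / real n) = 1" .
      then show ?thesis by (metis mult.commute mult.left_commute mult_1)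
    qed
    finally show ?thesis .
  qed

  obtain G where G: "\<And>z w. GDERIV (\<lambda>v. f v z) w :> G z w"
    and Glip: "\<And>z w u. norm (G z w - G z u) \<le> \<beta> * norm (w - u)"
    using smooth unfolding beta_smooth_def by metis
  have b0: "0 \<le> \<beta>"
    using Glip[of undefined "axis undefined 1" 0] by simp (meson norm_ge_zero order_trans)
  define R where "R = (\<lambda>\<omega>. pop_risk D f (A (dataS n \<omega>)))"
  define RS where "RS = (\<lambda>\<omega>. emp_risk f (dataS n \<omega>) (A (dataS n \<omega>)))"
  define Dl where "Dl = (\<lambda>\<omega>. (norm (A (dataS n \<omega>) - A (dataSi n i \<omega>)))\<^sup>2)"
  have Rnn: "0 \<le> R \<omega>" for \<omega> unfolding R_def pop_risk_def by (rule Bochner_Integration.integral_nonneg) (simp add: nonneg)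
  have RSnn: "0 \<le> RS \<omega>" for \<omega> unfolding RS_def emp_risk_def by (intro divide_nonneg_nonneg sum_nonneg) (simp_all add: nonneg)
  define P where "P = integral\<^sup>L \<Omega> RS"
  have P0: "0 \<le> P" unfolding P_def by (rule Bochner_Integration.integral_nonneg) (simp add: RSnn)
  have "(\<integral>\<^sup>+\<omega>. ennreal (RS \<omega>) \<partial>\<Omega>) = ennreal P"
    unfolding P_def RS_def using nn_integral_eq_integral[OF int_RS] RSnn[unfolded RS_def] by simp
  then have "(\<integral>\<^sup>+\<omega>. ennreal (FB \<omega>) \<partial>\<Omega>) = ennreal P" using E2 E3 by (simp add: RS_def)
  then have FBi: "integrable \<Omega> FB" and FBI: "integral\<^sup>L \<Omega> FB = P"
    using nn_integral_eq_integrable[of FB \<Omega> P] FBm P0 by (auto simp: FB_def nonneg)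
  have "(\<integral>\<^sup>+\<omega>. ennreal (FA \<omega>) \<partial>\<Omega>) = ennreal (integral\<^sup>L \<Omega> R)"
    unfolding E1 R_def using nn_integral_eq_integral[OF int_R] Rnn[unfolded R_def] by simp
  then have FAi: "integrable \<Omega> FA" and FAI: "integral\<^sup>L \<Omega> FA = integral\<^sup>L \<Omega> R"
    using nn_integral_eq_integrable[of FA \<Omega> "integral\<^sup>L \<Omega> R"] FAm Bochner_Integration.integral_nonneg[of \<Omega> R] Rnn
    by (auto simp: FA_def nonneg)
  have Psum: "eps_opt + eps_c = P"
    unfolding eps_opt_def eps_c_def P_def RS_def using Bochner_Integration.integral_diff[OF int_RS int_RW] by simp
  have gen: "eps_gen = integral\<^sup>L \<Omega> FA - integral\<^sup>L \<Omega> FB"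
    unfolding eps_gen_def FAI FBI P_def R_def RS_def using Bochner_Integration.integral_diff[OF int_R int_RS] by simp
  have Dli: "integrable \<Omega> Dl" using int_stab unfolding Dl_def .
  have stab: "eps_stab = integral\<^sup>L \<Omega> Dl" unfolding eps_stab_def Dl_def ..
  have s0: "0 \<le> eps_stab" unfolding stab by (rule Bochner_Integration.integral_nonneg) (simp add: Dl_def)
  have main: "\<bar>eps_gen\<bar> \<le> (2 * \<beta> * P) * t + (eps_stab / 2) / t + \<beta> * eps_stab" if t: "0 < t" for t
  proof -
    have pw: "\<bar>FA \<omega> - FB \<omega>\<bar> \<le> (2 * t * \<beta>) * FB \<omega> + Dl \<omega> * (1 / (2 * t)) + \<beta> * Dl \<omega>" for \<omega>
      using pointwise[of "\<lambda>v. f v (snd \<omega> i)" "G (snd \<omega> i)" \<beta> t "A (dataS n \<omega>)" "A (dataSi n i \<omega>)"]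
        G Glip b0 nonneg t
      unfolding FA_def FB_def Dl_def by simp
    have "\<bar>eps_gen\<bar> = \<bar>\<integral>\<omega>. FA \<omega> - FB \<omega> \<partial>\<Omega>\<bar>"
      unfolding gen using Bochner_Integration.integral_diff[OF FAi FBi] by simp
    also have "\<dots> \<le> (\<integral>\<omega>. \<bar>FA \<omega> - FB \<omega>\<bar> \<partial>\<Omega>)"
      by (rule integral_abs_bound)
    also have "\<dots> \<le> (\<integral>\<omega>. (2 * t * \<beta>) * FB \<omega> + Dl \<omega> * (1 / (2 * t)) + \<beta> * Dl \<omega> \<partial>\<Omega>)"
      using pw FAi FBi Dli by (intro integral_mono) auto
    also have "\<dots> = (2 * t * \<beta>) * P + eps_stab * (1 / (2 * t)) + \<beta> * eps_stab"
      using FBi Dli by (simp add: FBI stab)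
    also have "\<dots> = (2 * \<beta> * P) * t + (eps_stab / 2) / t + \<beta> * eps_stab"
      by (simp add: field_simps)
    finally show ?thesis .
  qed
  have "\<bar>eps_gen\<bar> \<le> 2 * sqrt ((2 * \<beta> * P) * (eps_stab / 2)) + \<beta> * eps_stab"
    by (rule opt_bound[OF main]) (use b0 P0 s0 in auto)
  also have "\<dots> \<le> 2 * sqrt (2 * \<beta> * (eps_opt + eps_c) * eps_stab) + 2 * \<beta> * eps_stab"
  proof -
    have "(2 * \<beta> * P) * (eps_stab / 2) \<le> 2 * \<beta> * P * eps_stab" using b0 P0 s0 by simp
    then have "sqrt ((2 * \<beta> * P) * (eps_stab / 2)) \<le> sqrt (2 * \<beta> * P * eps_stab)" by (rule real_sqrt_le_mono)
    moreover have "\<beta> * eps_stab \<le> 2 * \<beta> * eps_stab" using b0 s0 by simp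
    ultimately show ?thesis unfolding Psum by linarith
  qed
  finally show ?thesis .
qed

end
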